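(* For real $u,w$ and an integer $n\ge1$ let $g_n(u,w):=\sum_{i=1}^n i\,w^{i-1}u^{n-i}$. For every natural number $m\ge 1$: (i) $$g_{4m+2}(w,u)-g_{4m+2}(u,w)=\sum_{i=0}^{2m}(4m+1-2i)(uw)^i\left(u^{4m+1-2i}-w^{4m+1-2i}\right)$$ $$=(u+w)\sum_{i=0}^{m-1}(4m-1-4i)\left(u^{4m-4i}-w^{4m-4i}\right)(uw)^{2i}+2\sum_{i=0}^{m-1}\left(u^{4m+1-4i}-w^{4m+1-4i}\right)(uw)^{2i}+(uw)^{2m}(u-w);$$ (ii) $$g_{4m}(w,u)-g_{4m}(u,w)=\sum_{i=0}^{2m-1}(4m-1-2i)(uw)^i\left(u^{4m-1-2i}-w^{4m-1-2i}\right)$$ $$=(u+w)\sum_{i=0}^{m-1}(4m-3-4i)\left(u^{4m-2-4i}-w^{4m-2-4i}\right)(uw)^{2i}+2\sum_{i=0}^{m-1}\left(u^{4m-1-4i}-w^{4m-1-4i}\right)(uw)^{2i}.$$ Furthermore, let $\beta>0$, $k>0$, and $w=\delta(u)$ with $\delta$ the involution defined in the context. Then $g_n(w,u)>g_n(u,w)$ for all even positive integers $n$, both when $-k<u_0<0$ (for $u\in(0,u_1)$) and when $u_0<-k$ (for $u\in(0,k)$).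
   Context: $\Phi(u)=\beta\left(-\frac{u^4}{4}+\frac{k+u_0}{3}u^3-\frac{ku_0}{2}u^2\right)$. Case $-k<u_0<0$: $u_1$ is the unique point of $(0,k)$ with $\Phi(u_1)=\Phi(u_0)$, and for $u\in(0,u_1)$, $\delta(u)$ is the unique $w\in(u_0,0)$ with $\Phi(w)=\Phi(u)$. Case $u_0<-k$: $w_2$ is the unique point of $(u_0,0)$ with $\Phi(w_2)=\Phi(k)$, and for $u\in(0,k)$, $\delta(u)$ is the unique $w\in(w_2,0)$ with $\Phi(w)=\Phi(u)$. *)

theory Defs
  imports Complex_Main
begin

definition g :: "nat \<Rightarrow> real \<Rightarrow> real \<Rightarrow> real" where
  "g n u w = (\<Sum>i=1..n. real i * w ^ (i - 1) * u ^ (n - i))"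

definition Phi :: "real \<Rightarrow> real \<Rightarrow> real \<Rightarrow> real \<Rightarrow> real" where
  "Phi \<beta> k u0 u = \<beta> * (- (u ^ 4) / 4 + (k + u0) / 3 * u ^ 3 - k * u0 / 2 * u ^ 2)"

text \<open>Case -k < u0 < 0.\<close>
definition u1 :: "real \<Rightarrow> real \<Rightarrow> real \<Rightarrow> real" where
  "u1 \<beta> k u0 = (THE v. v \<in> {0<..<k} \<and> Phi \<beta> k u0 v = Phi \<beta> k u0 u0)"

definition delta1 :: "real \<Rightarrow> real \<Rightarrow> real \<Rightarrow> real \<Rightarrow> real" where
  "delta1 \<beta> k u0 u = (THE w. w \<in> {u0<..<0} \<and> Phi \<beta> k u0 w = Phi \<beta> k u0 u)"

text \<open>Case u0 < -k.\<close>
definition w2 :: "real \<Rightarrow> real \<Rightarrow> real \<Rightarrow> real" where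
  "w2 \<beta> k u0 = (THE w. w \<in> {u0<..<0} \<and> Phi \<beta> k u0 w = Phi \<beta> k u0 k)"

definition delta2 :: "real \<Rightarrow> real \<Rightarrow> real \<Rightarrow> real \<Rightarrow> real" where
  "delta2 \<beta> k u0 u = (THE w. w \<in> {w2 \<beta> k u0<..<0} \<and> Phi \<beta> k u0 w = Phi \<beta> k u0 u)"

end

theory Submission
  imports Defs
begin


lemma g_alt1: "g n u w = (\<Sum>i<n. real (i+1) * w^i * u^(n-1-i))"
  unfolding g_def
  by (rule sum.reindex_bij_witness[where j="\<lambda>j. j - 1" and i="\<lambda>i. i+1"]) auto

lemma g_alt2: "g n w u = (\<Sum>i<n. real (n-i) * w^i * u^(n-1-i))"
  unfolding g_def
  by (rule sum.reindex_bij_witness[where i="\<lambda>j. n - j" and j="\<lambda>i. n - i"])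
     (auto simp: mult.commute mult.left_commute)

lemma g_diff: "g n w u - g n u w = (\<Sum>i<n. (real n - 1 - 2*real i) * w^i * u^(n-1-i))"
  unfolding g_alt2[of n w u] g_alt1[of n u w] sum_subtractf[symmetric]
  by (rule sum.cong) (auto simp: of_nat_diff algebra_simps)

lemma g_pair: "g (2*N+2) w u - g (2*N+2) u w =
   (\<Sum>i=0..N. real (2*N+1-2*i) * (u*w)^i * (u^(2*N+1-2*i) - w^(2*N+1-2*i)))"
proof -
  let ?f = "\<lambda>i. (real (2*N+2) - 1 - 2*real i) * w^i * u^(2*N+2-1-i)"
  have split: "(\<Sum>i<2*N+2. ?f i) = (\<Sum>i=0..<N+1. ?f i) + (\<Sum>i=N+1..<2*N+2. ?f i)"
    by (subst sum.atLeastLessThan_concat) (auto simp: lessThan_atLeast0)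
  have A: "(\<Sum>i=0..<N+1. ?f i) = (\<Sum>i=0..N. real (2*N+1-2*i) * (u*w)^i * u^(2*N+1-2*i))"
  proof (rule sum.cong)
    fix i assume "i \<in> {0..N}"
    then have "i \<le> N" by auto
    then obtain d where d: "N = i + d" using le_Suc_ex by blast
    show "?f i = real (2*N+1-2*i) * (u*w)^i * u^(2*N+1-2*i)"
      unfolding d by (simp add: power_add power_mult_distrib algebra_simps)
  qed auto
  have B: "- (\<Sum>i=0..N. real (2*N+1-2*i) * (u*w)^i * w^(2*N+1-2*i)) = (\<Sum>i=N+1..<2*N+2. ?f i)"
    unfolding sum_negf[symmetric]
  proof (rule sum.reindex_bij_witness[where i="\<lambda>j. 2*N+1-j" and j="\<lambda>i. 2*N+1-i"])
    fix i assume "i \<in> {0..N}"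
    then have "i \<le> N" by auto
    then obtain d where d: "N = i + d" using le_Suc_ex by blast
    have e: "2*N+1-i = i + 2*d + 1" "2*N+2-1-(2*N+1-i) = i" "2*N+1-2*i = 2*d+1" unfolding d by auto
    show "?f (2*N+1-i) = - (real (2*N+1-2*i) * (u*w)^i * w^(2*N+1-2*i))"
      unfolding e unfolding d by (simp add: power_add power_mult_distrib algebra_simps)
  qed auto
  show ?thesis
    unfolding g_diff split A B[symmetric]
    by (simp add: sum_subtractf[symmetric] algebra_simps)
qed

lemma sum_pairs: fixes m :: nat shows "(\<Sum>i<2*m. f i) = (\<Sum>j<m. f (2*j) + f (2*j+1))"
  by (induction m) (auto simp: algebra_simps)

lemma term1:
  fixes u w :: real
  assumes "j < m"
  shows "real (4*m+1-2*(2*j)) * (u*w)^(2*j) * (u^(4*m+1-2*(2*j)) - w^(4*m+1-2*(2*j)))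
       + real (4*m+1-2*(2*j+1)) * (u*w)^(2*j+1) * (u^(4*m+1-2*(2*j+1)) - w^(4*m+1-2*(2*j+1)))
     = (u + w) * (real (4*m-1-4*j) * (u^(4*m-4*j) - w^(4*m-4*j)) * (u*w)^(2*j))
       + 2 * ((u^(4*m+1-4*j) - w^(4*m+1-4*j)) * (u*w)^(2*j))"
proof -
  obtain d where d: "m = j + 1 + d" using assms less_imp_Suc_add by fastforce
  have e: "4*m+1-2*(2*j) = 4*d+3+2" "4*m+1-2*(2*j+1) = 4*d+3" "4*m-4*j = 4*d+3+1"
     "4*m-1-4*j = 4*d+3" "4*m+1-4*j = 4*d+3+2" unfolding d by auto
  define a where "a = u^(4*d+3)"
  define b where "b = w^(4*d+3)"
  define c where "c = (u*w)^(2*j)"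
  have p: "u^(4*d+3+2) = a*u^2" "w^(4*d+3+2) = b*w^2" "u^(4*d+3+1) = a*u" "w^(4*d+3+1) = b*w"
      "(u*w)^(2*j+1) = c*(u*w)"
    unfolding a_def b_def c_def by (simp_all only: power_add power_one_right)
  show ?thesis unfolding e p unfolding a_def[symmetric] b_def[symmetric] c_def[symmetric]
    by (simp add: algebra_simps power2_eq_square)
qed

lemma term2:
  fixes u w :: real
  assumes "j < m"
  shows "real (4*m-1-2*(2*j)) * (u*w)^(2*j) * (u^(4*m-1-2*(2*j)) - w^(4*m-1-2*(2*j)))
       + real (4*m-1-2*(2*j+1)) * (u*w)^(2*j+1) * (u^(4*m-1-2*(2*j+1)) - w^(4*m-1-2*(2*j+1)))
     = (u + w) * (real (4*m-3-4*j) * (u^(4*m-2-4*j) - w^(4*m-2-4*j)) * (u*w)^(2*j))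
       + 2 * ((u^(4*m-1-4*j) - w^(4*m-1-4*j)) * (u*w)^(2*j))"
proof -
  obtain d where d: "m = j + 1 + d" using assms less_imp_Suc_add by fastforce
  have e: "4*m-1-2*(2*j) = 4*d+1+2" "4*m-1-2*(2*j+1) = 4*d+1" "4*m-2-4*j = 4*d+1+1"
     "4*m-3-4*j = 4*d+1" "4*m-1-4*j = 4*d+1+2" unfolding d by auto
  define a where "a = u^(4*d+1)"
  define b where "b = w^(4*d+1)"
  define c where "c = (u*w)^(2*j)"
  have p: "u^(4*d+1+2) = a*u^2" "w^(4*d+1+2) = b*w^2" "u^(4*d+1+1) = a*u" "w^(4*d+1+1) = b*w"
      "(u*w)^(2*j+1) = c*(u*w)"
    unfolding a_def b_def c_def by (simp_all only: power_add power_one_right)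
  show ?thesis unfolding e p unfolding a_def[symmetric] b_def[symmetric] c_def[symmetric]
    by (simp add: algebra_simps power2_eq_square)
qed

lemma part1:
  fixes u w :: real
  assumes "m \<ge> 1"
  shows "g (4*m+2) w u - g (4*m+2) u w
        = (\<Sum>i=0..2*m. real (4*m+1-2*i) * (u*w)^i * (u^(4*m+1-2*i) - w^(4*m+1-2*i)))
    \<and> (\<Sum>i=0..2*m. real (4*m+1-2*i) * (u*w)^i * (u^(4*m+1-2*i) - w^(4*m+1-2*i)))
        = (u + w) * (\<Sum>i=0..m-1. real (4*m-1-4*i) * (u^(4*m-4*i) - w^(4*m-4*i)) * (u*w)^(2*i))
          + 2 * (\<Sum>i=0..m-1. (u^(4*m+1-4*i) - w^(4*m+1-4*i)) * (u*w)^(2*i))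
          + (u*w)^(2*m) * (u - w)"
proof
  show "g (4*m+2) w u - g (4*m+2) u w
        = (\<Sum>i=0..2*m. real (4*m+1-2*i) * (u*w)^i * (u^(4*m+1-2*i) - w^(4*m+1-2*i)))"
    using g_pair[of "2*m" w u] by (simp add: mult.assoc)
  have r: "{0..m-1} = {..<m}" using assms by auto
  have "(\<Sum>i=0..2*m. real (4*m+1-2*i) * (u*w)^i * (u^(4*m+1-2*i) - w^(4*m+1-2*i)))
     = (\<Sum>i<2*m. real (4*m+1-2*i) * (u*w)^i * (u^(4*m+1-2*i) - w^(4*m+1-2*i))) + (u*w)^(2*m) * (u - w)"
    by (simp add: atLeast0AtMost lessThan_Suc_atMost[symmetric])
  also have "(\<Sum>i<2*m. real (4*m+1-2*i) * (u*w)^i * (u^(4*m+1-2*i) - w^(4*m+1-2*i)))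
     = (\<Sum>j<m. (u + w) * (real (4*m-1-4*j) * (u^(4*m-4*j) - w^(4*m-4*j)) * (u*w)^(2*j))
       + 2 * ((u^(4*m+1-4*j) - w^(4*m+1-4*j)) * (u*w)^(2*j)))"
    unfolding sum_pairs by (rule sum.cong[OF refl], rule term1, simp)
  finally show "(\<Sum>i=0..2*m. real (4*m+1-2*i) * (u*w)^i * (u^(4*m+1-2*i) - w^(4*m+1-2*i)))
        = (u + w) * (\<Sum>i=0..m-1. real (4*m-1-4*i) * (u^(4*m-4*i) - w^(4*m-4*i)) * (u*w)^(2*i))
          + 2 * (\<Sum>i=0..m-1. (u^(4*m+1-4*i) - w^(4*m+1-4*i)) * (u*w)^(2*i))
          + (u*w)^(2*m) * (u - w)"
    unfolding r by (simp add: sum.distrib sum_distrib_left)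
qed

lemma part2:
  fixes u w :: real
  assumes "m \<ge> 1"
  shows "g (4*m) w u - g (4*m) u w
        = (\<Sum>i=0..2*m-1. real (4*m-1-2*i) * (u*w)^i * (u^(4*m-1-2*i) - w^(4*m-1-2*i)))
    \<and> (\<Sum>i=0..2*m-1. real (4*m-1-2*i) * (u*w)^i * (u^(4*m-1-2*i) - w^(4*m-1-2*i)))
        = (u + w) * (\<Sum>i=0..m-1. real (4*m-3-4*i) * (u^(4*m-2-4*i) - w^(4*m-2-4*i)) * (u*w)^(2*i))
          + 2 * (\<Sum>i=0..m-1. (u^(4*m-1-4*i) - w^(4*m-1-4*i)) * (u*w)^(2*i))"
proof
  obtain m' where m': "m = Suc m'" using assms by (cases m) auto
  have e1: "4*m = 2*(2*m-1)+2" "2*(2*m-1)+1 = 4*m-1" unfolding m' by auto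
  show "g (4*m) w u - g (4*m) u w
        = (\<Sum>i=0..2*m-1. real (4*m-1-2*i) * (u*w)^i * (u^(4*m-1-2*i) - w^(4*m-1-2*i)))"
    unfolding e1(1) g_pair e1(2) by (simp add: mult.assoc)
  have r: "{0..m-1} = {..<m}" using assms by auto
  have r2: "{0..2*m-1} = {..<2*m}" using assms by auto
  have "(\<Sum>i<2*m. real (4*m-1-2*i) * (u*w)^i * (u^(4*m-1-2*i) - w^(4*m-1-2*i)))
     = (\<Sum>j<m. (u + w) * (real (4*m-3-4*j) * (u^(4*m-2-4*j) - w^(4*m-2-4*j)) * (u*w)^(2*j))
       + 2 * ((u^(4*m-1-4*j) - w^(4*m-1-4*j)) * (u*w)^(2*j)))"
    unfolding sum_pairs by (rule sum.cong[OF refl], rule term2, simp)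
  then show "(\<Sum>i=0..2*m-1. real (4*m-1-2*i) * (u*w)^i * (u^(4*m-1-2*i) - w^(4*m-1-2*i)))
        = (u + w) * (\<Sum>i=0..m-1. real (4*m-3-4*i) * (u^(4*m-2-4*i) - w^(4*m-2-4*i)) * (u*w)^(2*i))
          + 2 * (\<Sum>i=0..m-1. (u^(4*m-1-4*i) - w^(4*m-1-4*i)) * (u*w)^(2*i))"
    unfolding r r2 by (simp add: sum.distrib sum_distrib_left)
qed



lemma odd_pow_less:
  fixes u w :: real
  assumes "odd n" "w < u"
  shows "w^n < u^n"
proof (cases "0 \<le> w")
  case True
  then show ?thesis using assms by (intro power_strict_mono) (auto elim: oddE)
next
  case False
  show ?thesis
  proof (cases "u \<le> 0")
    case True
    have "(-u)^n < (-w)^n" using assms True False by (intro power_strict_mono) (auto elim: oddE)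
    then show ?thesis using assms(1) by (simp add: power_minus_odd)
  next
    case False
    then have "0 < u^n" by simp
    moreover have "w^n < 0" using \<open>\<not> 0 \<le> w\<close> assms(1)
      proof -
      obtain k where "n = Suc (2*k)" using assms(1) by (auto elim: oddE)
      then show ?thesis using \<open>\<not> 0 \<le> w\<close> odd_power_less_zero[of w k] by simp
    qed
    ultimately show ?thesis by linarith
  qed
qed

lemma even_pow_prod:
  fixes u w :: real
  assumes "w < u"
  shows "0 \<le> (u + w) * (u^(2*p) - w^(2*p))"
proof (cases "0 \<le> u + w")
  case True
  have "u^2 - w^2 = (u-w)*(u+w)" by (simp add: algebra_simps power2_eq_square)
  moreover have "0 \<le> (u-w)*(u+w)" using True assms by simp
  ultimately have "w^2 \<le> u^2" by simp
  then have "(w^2)^p \<le> (u^2)^p" using power_mono[of "w^2" "u^2" p] by simp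
  then show ?thesis using True by (simp add: power_mult[symmetric] mult.commute)
next
  case False
  have "u^2 - w^2 = (u-w)*(u+w)" by (simp add: algebra_simps power2_eq_square)
  moreover have "(u-w)*(u+w) \<le> 0" using False assms by (simp add: mult_nonneg_nonpos)
  ultimately have "u^2 \<le> w^2" by simp
  then have "(u^2)^p \<le> (w^2)^p" using power_mono[of "u^2" "w^2" p] by simp
  then show ?thesis using False by (simp add: power_mult[symmetric] mult.commute mult_nonpos_nonpos)
qed

lemma gpos:
  fixes u w :: real
  assumes "even n" "n > 0" "w < u"
  shows "g n u w < g n w u"
proof -
  have sq: "\<And>i. 0 \<le> (u*w)^(2*i)" by (simp add: power_mult)
  have T1: "\<And>c p i. 0 \<le> (u + w) * (real c * (u^(2*p) - w^(2*p)) * (u*w)^(2*i))"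
  proof -
    fix c p i
    have "0 \<le> real c * ((u + w) * (u^(2*p) - w^(2*p))) * (u*w)^(2*i)"
      using even_pow_prod[OF assms(3), of p] sq[of i] by simp
    then show "0 \<le> (u + w) * (real c * (u^(2*p) - w^(2*p)) * (u*w)^(2*i))"
      by (simp add: algebra_simps)
  qed
  have T2: "\<And>e i. odd e \<Longrightarrow> 0 \<le> (u^e - w^e) * (u*w)^(2*i)"
    using odd_pow_less[OF _ assms(3)] sq by (simp add: less_imp_le)
  obtain q where q: "n = 2*q" using assms(1) by blast
  consider "q = 1" | m where "q = 2*m+1" "m \<ge> 1" | m where "q = 2*m" "m \<ge> 1"
  proof -
    have "q > 0" using assms(2) q by simp
    show ?thesis
    proof (cases "even q")
      case True
      then obtain m where "q = 2*m" by blast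
      then show ?thesis using \<open>q > 0\<close> that(3) by simp
    next
      case False
      then obtain m where m: "q = 2*m+1" by (blast elim: oddE)
      show ?thesis
      proof (cases "m = 0")
        case True then show ?thesis using m that(1) by simp
      next
        case False then show ?thesis using m that(2) by simp
      qed
    qed
  qed
  then show ?thesis
  proof cases
    case 1
    then show ?thesis using q assms(3) by (simp add: g_def numeral_2_eq_2)
  next
    case 2
    then have n: "n = 4*m+2" using q by simp
    let ?A = "(u + w) * (\<Sum>i=0..m-1. real (4*m-1-4*i) * (u^(4*m-4*i) - w^(4*m-4*i)) * (u*w)^(2*i))"
    let ?B = "(\<Sum>i=0..m-1. (u^(4*m+1-4*i) - w^(4*m+1-4*i)) * (u*w)^(2*i))"
    have "0 \<le> ?A" unfolding sum_distrib_left
    proof (rule sum_nonneg)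
      fix i assume "i \<in> {0..m-1}"
      then have "4*m-4*i = 2*(2*m-2*i)" by auto
      then show "0 \<le> (u + w) * (real (4*m-1-4*i) * (u^(4*m-4*i) - w^(4*m-4*i)) * (u*w)^(2*i))"
        using T1 by metis
    qed
    moreover have "0 < ?B"
    proof -
      have "0 < (u^(4*m+1-4*0) - w^(4*m+1-4*0)) * (u*w)^(2*0)"
        using odd_pow_less[OF _ assms(3), of "4*m+1"] by simp
      moreover have "0 \<le> (u^(4*m+1-4*i) - w^(4*m+1-4*i)) * (u*w)^(2*i)" if "i \<in> {0..m-1}" for i
        using that by (intro T2) auto
      ultimately show ?thesis
        by (intro sum_pos2[where i=0]) auto
    qed
    moreover have "0 \<le> (u*w)^(2*m) * (u - w)" using sq assms(3) by simp
    ultimately show ?thesis using part1[OF 2(2), of w u] unfolding n by linarith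
  next
    case 3
    then have n: "n = 4*m" using q by simp
    let ?A = "(u + w) * (\<Sum>i=0..m-1. real (4*m-3-4*i) * (u^(4*m-2-4*i) - w^(4*m-2-4*i)) * (u*w)^(2*i))"
    let ?B = "(\<Sum>i=0..m-1. (u^(4*m-1-4*i) - w^(4*m-1-4*i)) * (u*w)^(2*i))"
    have "0 \<le> ?A" unfolding sum_distrib_left
    proof (rule sum_nonneg)
      fix i assume "i \<in> {0..m-1}"
      then have "4*m-2-4*i = 2*(2*m-1-2*i)" using 3(2) by auto
      then show "0 \<le> (u + w) * (real (4*m-3-4*i) * (u^(4*m-2-4*i) - w^(4*m-2-4*i)) * (u*w)^(2*i))"
        using T1 by metis
    qed
    moreover have "0 < ?B"
    proof -
      have "0 < (u^(4*m-1-4*0) - w^(4*m-1-4*0)) * (u*w)^(2*0)"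
        using odd_pow_less[OF _ assms(3), of "4*m-1"] 3(2) by simp
      moreover have "0 \<le> (u^(4*m-1-4*i) - w^(4*m-1-4*i)) * (u*w)^(2*i)" if "i \<in> {0..m-1}" for i
        using that 3(2) by (intro T2) auto
      ultimately show ?thesis
        by (intro sum_pos2[where i=0]) auto
    qed
    ultimately show ?thesis using part2[OF 3(2), of w u] unfolding n by linarith
  qed
qed



lemma Phi_deriv: "((\<lambda>x. Phi \<beta> k u0 x) has_real_derivative (- \<beta> * (x * (x - k) * (x - u0)))) (at x)"
  unfolding Phi_def
  by (auto intro!: derivative_eq_intros simp: algebra_simps power2_eq_square power3_eq_cube)

lemma Phi_cont: "continuous_on S (\<lambda>x. Phi \<beta> k u0 x)"
  unfolding Phi_def by (intro continuous_intros) auto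

lemma Phi_0: "Phi \<beta> k u0 0 = 0" by (simp add: Phi_def)

lemma Phi_diff: "Phi \<beta> k u0 u0 - Phi \<beta> k u0 k = \<beta> / 12 * ((u0^2 - k^2) * (u0 - k)^2)"
  unfolding Phi_def by (simp add: field_simps power2_eq_square power3_eq_cube power4_eq_xxxx)

lemma Phi_dec:
  assumes "\<beta> > 0" "k > 0" "u0 < 0" "u0 \<le> a" "a < b" "b \<le> 0"
  shows "Phi \<beta> k u0 b < Phi \<beta> k u0 a"
proof (rule DERIV_neg_imp_decreasing_open[OF assms(5)])
  fix x assume x: "a < x" "x < b"
  have "0 < x * (x - k)" using x assms by (intro mult_neg_neg) linarith+
  moreover have "0 < x - u0" using x assms by auto
  ultimately have "0 < x * (x - k) * (x - u0)" by (rule mult_pos_pos)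
  then have "- \<beta> * (x * (x - k) * (x - u0)) < 0" using assms(1) by (simp add: mult_pos_pos)
  then show "\<exists>y. ((\<lambda>x. Phi \<beta> k u0 x) has_real_derivative y) (at x) \<and> y < 0"
    using Phi_deriv by blast
qed (rule Phi_cont)

lemma Phi_inc:
  assumes "\<beta> > 0" "k > 0" "u0 < 0" "0 \<le> a" "a < b" "b \<le> k"
  shows "Phi \<beta> k u0 a < Phi \<beta> k u0 b"
proof (rule DERIV_pos_imp_increasing_open[OF assms(5)])
  fix x assume x: "a < x" "x < b"
  have "x * (x - k) < 0" using x assms by (intro mult_pos_neg) linarith+
  moreover have "0 < x - u0" using x assms by auto
  ultimately have "x * (x - k) * (x - u0) < 0" by (rule mult_neg_pos)
  then have "0 < - \<beta> * (x * (x - k) * (x - u0))" using assms(1) by (simp add: mult_pos_neg)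
  then show "\<exists>y. ((\<lambda>x. Phi \<beta> k u0 x) has_real_derivative y) (at x) \<and> 0 < y"
    using Phi_deriv by blast
qed (rule Phi_cont)

lemma dec_unique:
  assumes "\<beta> > 0" "k > 0" "u0 < 0" "u0 \<le> a" "a < 0"
    "0 < y" "y < Phi \<beta> k u0 a"
  shows "\<exists>!w. w \<in> {a<..<0} \<and> Phi \<beta> k u0 w = y"
proof (rule ex_ex1I)
  obtain w where w: "a \<le> w" "w \<le> 0" "Phi \<beta> k u0 w = y"
    using IVT2'[of "Phi \<beta> k u0" 0 y a] assms Phi_0[of \<beta> k u0] Phi_cont by fastforce
  have "w \<noteq> a" "w \<noteq> 0" using w assms Phi_0[of \<beta> k u0] by auto
  then show "\<exists>w. w \<in> {a<..<0} \<and> Phi \<beta> k u0 w = y" using w by (intro exI[of _ w]) auto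
next
  fix x z assume "x \<in> {a<..<0} \<and> Phi \<beta> k u0 x = y" "z \<in> {a<..<0} \<and> Phi \<beta> k u0 z = y"
  then show "x = z" using Phi_dec[OF assms(1-3), of x z] Phi_dec[OF assms(1-3), of z x] assms(4)
    by (cases x z rule: linorder_cases) auto
qed

lemma inc_unique:
  assumes "\<beta> > 0" "k > 0" "u0 < 0" "0 < b" "b \<le> k"
    "0 < y" "y < Phi \<beta> k u0 b"
  shows "\<exists>!v. v \<in> {0<..<b} \<and> Phi \<beta> k u0 v = y"
proof (rule ex_ex1I)
  obtain v where v: "0 \<le> v" "v \<le> b" "Phi \<beta> k u0 v = y"
    using IVT'[of "Phi \<beta> k u0" 0 y b] assms Phi_0[of \<beta> k u0] Phi_cont by fastforce
  have "v \<noteq> b" "v \<noteq> 0" using v assms Phi_0[of \<beta> k u0] by auto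
  then show "\<exists>v. v \<in> {0<..<b} \<and> Phi \<beta> k u0 v = y" using v by (intro exI[of _ v]) auto
next
  fix x z assume "x \<in> {0<..<b} \<and> Phi \<beta> k u0 x = y" "z \<in> {0<..<b} \<and> Phi \<beta> k u0 z = y"
  then show "x = z" using Phi_inc[OF assms(1-3), of x z] Phi_inc[OF assms(1-3), of z x] assms(5)
    by (cases x z rule: linorder_cases) auto
qed



lemma case1:
  assumes "\<beta> > 0" "k > 0" "-k < u0" "u0 < 0" "even n" "n > 0" "0 < u" "u < u1 \<beta> k u0"
  shows "g n (delta1 \<beta> k u0 u) u > g n u (delta1 \<beta> k u0 u)"
proof -
  let ?P = "Phi \<beta> k u0"
  have "u0^2 < k^2" using assms(2-4) power_strict_mono[of "-u0" k 2] by simp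
  then have "(u0^2 - k^2) * (u0 - k)^2 < 0" using assms by (intro mult_neg_pos) auto
  moreover have "0 < \<beta> / 12" using assms(1) by simp
  ultimately have "\<beta> / 12 * ((u0^2 - k^2) * (u0 - k)^2) < 0" by (simp add: mult_pos_neg)
  then have lt: "?P u0 < ?P k" using Phi_diff[of \<beta> k u0] by linarith
  have pos: "0 < ?P u0" using Phi_dec[OF assms(1,2,4), of u0 0] assms Phi_0[of \<beta> k u0] by simp
  have "\<exists>!v. v \<in> {0<..<k} \<and> ?P v = ?P u0"
    using inc_unique[OF assms(1,2,4), of k "?P u0"] assms lt pos by simp
  from theI'[OF this] have u1: "u1 \<beta> k u0 \<in> {0<..<k}" "?P (u1 \<beta> k u0) = ?P u0"
    unfolding u1_def by auto
  have "?P u < ?P (u1 \<beta> k u0)" using Phi_inc[OF assms(1,2,4), of u "u1 \<beta> k u0"] assms u1 by simp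
  moreover have "0 < ?P u" using Phi_inc[OF assms(1,2,4), of 0 u] assms u1 Phi_0[of \<beta> k u0] by simp
  ultimately have "\<exists>!w. w \<in> {u0<..<0} \<and> ?P w = ?P u"
    using dec_unique[OF assms(1,2,4), of u0 "?P u"] assms u1 by simp
  from theI'[OF this] have "delta1 \<beta> k u0 u \<in> {u0<..<0}"
    unfolding delta1_def by auto
  then have "delta1 \<beta> k u0 u < u" using assms by simp
  then show ?thesis using gpos assms by blast
qed

lemma case2:
  assumes "\<beta> > 0" "k > 0" "u0 < -k" "even n" "n > 0" "0 < u" "u < k"
  shows "g n (delta2 \<beta> k u0 u) u > g n u (delta2 \<beta> k u0 u)"
proof -
  let ?P = "Phi \<beta> k u0"
  have u0n: "u0 < 0" using assms by simp
  have "k^2 < u0^2" using assms(2,3) power_strict_mono[of k "-u0" 2] by simp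
  then have "0 < (u0^2 - k^2) * (u0 - k)^2" using assms by (intro mult_pos_pos) auto
  moreover have "0 < \<beta> / 12" using assms(1) by simp
  ultimately have "0 < \<beta> / 12 * ((u0^2 - k^2) * (u0 - k)^2)" by (rule mult_pos_pos[rotated])
  then have lt: "?P k < ?P u0" using Phi_diff[of \<beta> k u0] by linarith
  have pos: "0 < ?P k" using Phi_inc[OF assms(1,2) u0n, of 0 k] assms Phi_0[of \<beta> k u0] by simp
  have "\<exists>!w. w \<in> {u0<..<0} \<and> ?P w = ?P k"
    using dec_unique[OF assms(1,2) u0n, of u0 "?P k"] u0n lt pos by simp
  from theI'[OF this] have w2: "w2 \<beta> k u0 \<in> {u0<..<0}" "?P (w2 \<beta> k u0) = ?P k"
    unfolding w2_def by auto
  have "?P u < ?P (w2 \<beta> k u0)" using Phi_inc[OF assms(1,2) u0n, of u k] assms w2 by simp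
  moreover have "0 < ?P u" using Phi_inc[OF assms(1,2) u0n, of 0 u] assms Phi_0[of \<beta> k u0] by simp
  ultimately have "\<exists>!w. w \<in> {w2 \<beta> k u0<..<0} \<and> ?P w = ?P u"
    using dec_unique[OF assms(1,2) u0n, of "w2 \<beta> k u0" "?P u"] w2 by simp
  from theI'[OF this] have "delta2 \<beta> k u0 u \<in> {w2 \<beta> k u0<..<0}"
    unfolding delta2_def by auto
  then have "delta2 \<beta> k u0 u < u" using assms by simp
  then show ?thesis using gpos assms by blast
qed


theorem lemma3p7:
  shows
  "(\<forall>(m::nat) (u::real) (w::real). m \<ge> 1 \<longrightarrow>
      g (4*m+2) w u - g (4*m+2) u w
        = (\<Sum>i=0..2*m. real (4*m+1-2*i) * (u*w)^i * (u^(4*m+1-2*i) - w^(4*m+1-2*i)))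
    \<and> (\<Sum>i=0..2*m. real (4*m+1-2*i) * (u*w)^i * (u^(4*m+1-2*i) - w^(4*m+1-2*i)))
        = (u + w) * (\<Sum>i=0..m-1. real (4*m-1-4*i) * (u^(4*m-4*i) - w^(4*m-4*i)) * (u*w)^(2*i))
          + 2 * (\<Sum>i=0..m-1. (u^(4*m+1-4*i) - w^(4*m+1-4*i)) * (u*w)^(2*i))
          + (u*w)^(2*m) * (u - w))
   \<and> (\<forall>(m::nat) (u::real) (w::real). m \<ge> 1 \<longrightarrow>
      g (4*m) w u - g (4*m) u w
        = (\<Sum>i=0..2*m-1. real (4*m-1-2*i) * (u*w)^i * (u^(4*m-1-2*i) - w^(4*m-1-2*i)))
    \<and> (\<Sum>i=0..2*m-1. real (4*m-1-2*i) * (u*w)^i * (u^(4*m-1-2*i) - w^(4*m-1-2*i)))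
        = (u + w) * (\<Sum>i=0..m-1. real (4*m-3-4*i) * (u^(4*m-2-4*i) - w^(4*m-2-4*i)) * (u*w)^(2*i))
          + 2 * (\<Sum>i=0..m-1. (u^(4*m-1-4*i) - w^(4*m-1-4*i)) * (u*w)^(2*i)))
   \<and> (\<forall>(\<beta>::real) (k::real) (u0::real) (n::nat) (u::real).
      \<beta> > 0 \<longrightarrow> k > 0 \<longrightarrow> -k < u0 \<longrightarrow> u0 < 0 \<longrightarrow> even n \<longrightarrow> n > 0 \<longrightarrow>
      0 < u \<longrightarrow> u < u1 \<beta> k u0 \<longrightarrow>
      g n (delta1 \<beta> k u0 u) u > g n u (delta1 \<beta> k u0 u))
   \<and> (\<forall>(\<beta>::real) (k::real) (u0::real) (n::nat) (u::real).
      \<beta> > 0 \<longrightarrow> k > 0 \<longrightarrow> u0 < -k \<longrightarrow> even n \<longrightarrow> n > 0 \<longrightarrow>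
      0 < u \<longrightarrow> u < k \<longrightarrow>
      g n (delta2 \<beta> k u0 u) u > g n u (delta2 \<beta> k u0 u))"
    using part1 part2 case1 case2 by blast

end
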